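(* Let $U$ be a set and $\mathcal{C}\subset\mathcal{P}(U)$ a collection of subsets of $U$ with $\emptyset\in\mathcal{C}$. Then at least one of the following holds: (a) $\mathcal{C}=\mathcal{P}(X)$ for some $X\subset U$; (b) there exists $T\subset U$ with $|T|\ge2$ such that $\mathcal{C}\cap\mathcal{P}(T)=\mathcal{P}(T)-\{T\}$; (c) there exist $S\subset U$ with $|S|\ge2$ and $s\in S$ such that $\{C\in\mathcal{C}:\ s\in C\}\cap\mathcal{P}(S)=\{S\}$.
   Context: $\mathcal{P}(Y)$ denotes the power set of a set $Y$. *)

theory Defs
  imports Main
begin

end

theory Submission
  imports Defs
begin

lemma card2_aux:
  assumes "finite S" "a \<in> S" "b \<in> S" "a \<noteq> b"
  shows "card S \<ge> 2"
proof -
  have "card {a,b} \<le> card S" using assms by (intro card_mono) auto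
  thus ?thesis using assms by simp
qed

theorem lemma2p4:
  fixes U :: "'a set" and C :: "'a set set"
  assumes "finite U" and "C \<subseteq> Pow U" and "{} \<in> C"
  shows "(\<exists>X. X \<subseteq> U \<and> C = Pow X)
       \<or> (\<exists>T. T \<subseteq> U \<and> card T \<ge> 2 \<and> C \<inter> Pow T = Pow T - {T})
       \<or> (\<exists>S s. S \<subseteq> U \<and> card S \<ge> 2 \<and> s \<in> S \<and> {A \<in> C. s \<in> A} \<inter> Pow S = {S})"
proof (cases "\<exists>s A. A \<in> C \<and> s \<in> A \<and> {s} \<notin> C")
  case True
  then obtain s A where sA: "A \<in> C" "s \<in> A" "{s} \<notin> C" by blast
  obtain S where S: "S \<in> C \<and> s \<in> S" and Smin: "\<forall>D. D \<in> C \<and> s \<in> D \<longrightarrow> card S \<le> card D"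
    using ex_has_least_nat[of "\<lambda>D. D \<in> C \<and> s \<in> D" A card] sA by blast
  have SU: "S \<subseteq> U" using S assms(2) by blast
  have fS: "finite S" using SU assms(1) finite_subset by blast
  have "S \<noteq> {s}" using S sA by blast
  then obtain t where "t \<in> S" "t \<noteq> s" using S by blast
  hence c2: "card S \<ge> 2" using card2_aux[OF fS, of s t] S by auto
  have "{D \<in> C. s \<in> D} \<inter> Pow S = {S}"
  proof safe
    fix D x assume D: "D \<in> C" "s \<in> D" "D \<subseteq> S" "x \<in> S"
    show "x \<in> D"
    proof (rule ccontr)
      assume "x \<notin> D"
      hence "D \<subset> S" using D by blast
      hence "card D < card S" using fS psubset_card_mono by blast
      thus False using Smin D by force
    qed
  qed (use S in auto)
  hence "\<exists>S s. S \<subseteq> U \<and> card S \<ge> 2 \<and> s \<in> S \<and> {A \<in> C. s \<in> A} \<inter> Pow S = {S}"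
    using SU c2 S by blast
  thus ?thesis by (intro disjI2)
next
  case False
  hence sing: "\<And>s A. A \<in> C \<Longrightarrow> s \<in> A \<Longrightarrow> {s} \<in> C" by blast
  define X where "X = \<Union>C"
  have XU: "X \<subseteq> U" using assms(2) X_def by blast
  have CX: "C \<subseteq> Pow X" using X_def by blast
  show ?thesis
  proof (cases "C = Pow X")
    case True
    hence "\<exists>X. X \<subseteq> U \<and> C = Pow X" using XU by blast
    thus ?thesis by (intro disjI1)
  next
    case False
    then obtain T0 where "T0 \<subseteq> X" "T0 \<notin> C" using CX by blast
    hence "\<exists>T. (T \<subseteq> X \<and> T \<notin> C) \<and> (\<forall>D. D \<subseteq> X \<and> D \<notin> C \<longrightarrow> card T \<le> card D)"
      by (intro ex_has_least_nat[of "\<lambda>D. D \<subseteq> X \<and> D \<notin> C" T0 card]) simp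
    then obtain T where T: "T \<subseteq> X \<and> T \<notin> C"
      and Tmin: "\<forall>D. D \<subseteq> X \<and> D \<notin> C \<longrightarrow> card T \<le> card D"
      by (elim exE conjE) simp
    have "T \<subseteq> U" using T XU by (meson subset_trans)
    hence fT: "finite T" using assms(1) by (rule finite_subset)
    have sub: "D \<in> C" if "D \<subset> T" for D
    proof (rule ccontr)
      assume "D \<notin> C"
      moreover have "card D < card T" using that fT psubset_card_mono by blast
      moreover have "D \<subseteq> X" using that T by auto
      ultimately show False using Tmin by (meson leD)
    qed
    have "T \<noteq> {}" using T assms(3) by blast
    then obtain a where a: "a \<in> T" by blast
    have "T \<noteq> {a}"
    proof
      assume "T = {a}"
      then obtain A where "A \<in> C" "a \<in> A" using T X_def by blast
      thus False using sing T \<open>T = {a}\<close> by blast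
    qed
    then obtain b where b: "b \<in> T" "b \<noteq> a" using a by blast
    have c2: "card T \<ge> 2" using card2_aux[OF fT a b(1)] b by auto
    have "C \<inter> Pow T = Pow T - {T}"
    proof (intro equalityI subsetI)
      fix D assume "D \<in> C \<inter> Pow T" thus "D \<in> Pow T - {T}" using T by auto
    next
      fix D assume "D \<in> Pow T - {T}"
      hence "D \<subset> T" by auto
      thus "D \<in> C \<inter> Pow T" using sub by auto
    qed
    hence "\<exists>T. T \<subseteq> U \<and> card T \<ge> 2 \<and> C \<inter> Pow T = Pow T - {T}"
      using c2 T XU by blast
    thus ?thesis by (intro disjI2 disjI1)
  qed
qed

end
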